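(* Let $d$ be an odd prime and $n\ge1$. Let $P=Z_1^{a_1}X_1^{b_1}\cdots Z_n^{a_n}X_n^{b_n}$ and $Q=Z_1^{c_1}X_1^{e_1}\cdots Z_n^{c_n}X_n^{e_n}$ be elements of $\mathcal{P}_d^n$ with $(P,Q)=\sum_{i=1}^n(a_ie_i-b_ic_i)=1$ in $\mathbb{Z}_d$. Then there exists a circuit $M$ built from the gates $C_X$, $F$, $S$ such that, for some exponents $a'_i,b'_i,c'_i,e'_i\in\mathbb{Z}_d$ and complex scalars $\lambda,\mu$, $$MPM^{-1}=\lambda Z_1^{a'_1}X_1^{b'_1}\cdots Z_n^{a'_n}X_n^{b'_n},\qquad MQM^{-1}=\mu Z_1^{c'_1}X_1^{e'_1}\cdots Z_n^{c'_n}X_n^{e'_n},$$ and there exists $j\in\{1,\dots,n\}$ with $a'_je'_j-b'_jc'_j=1$ in $\mathbb{Z}_d$.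
   Context: $\omega=e^{2\pi i/d}$; $X|j\rangle=|j+1\bmod d\rangle$, $Z|j\rangle=\omega^j|j\rangle$, $F|j\rangle=\frac1{\sqrt d}\sum_m\omega^{jm}|m\rangle$, $S|j\rangle=\omega^{j(j+1)/2}|j\rangle$, $C_X|j\rangle|k\rangle=|j\rangle|j+k\bmod d\rangle$. Subscript $i$ on $X_i,Z_i$ means the operator acts on qudit $i$. $\mathcal{P}_d^n$ is the group of operators $\omega^kZ_1^{a_1}X_1^{b_1}\cdots Z_n^{a_n}X_n^{b_n}$. A circuit built from a gate set is a finite product of gates from the set, one-qudit gates on any qudit, two-qudit gates on any ordered pair of distinct qudits. *)

theory Defs
  imports Complex_Main "HOL-Computational_Algebra.Primes"
begin

text \<open>n qudits of dimension d, indexed 0..n-1. A computational basis state is a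
configuration j : nat => nat with j i < d for i < n and j i = 0 for i >= n.
An operator on the Hilbert space (C^d)^{\<otimes> n} is represented by its matrix
kernel A x y = <x|A|y>, only values on configurations matter.\<close>

type_synonym qop = "(nat \<Rightarrow> nat) \<Rightarrow> (nat \<Rightarrow> nat) \<Rightarrow> complex"

definition Conf :: "nat \<Rightarrow> nat \<Rightarrow> (nat \<Rightarrow> nat) set" where
  "Conf n d = {j. (\<forall>i<n. j i < d) \<and> (\<forall>i\<ge>n. j i = 0)}"

definition op_mult :: "nat \<Rightarrow> nat \<Rightarrow> qop \<Rightarrow> qop \<Rightarrow> qop" where
  "op_mult n d A B = (\<lambda>x y. \<Sum>z\<in>Conf n d. A x z * B z y)"

definition op_id :: qop where
  "op_id = (\<lambda>x y. if x = y then 1 else 0)"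

definition op_scale :: "complex \<Rightarrow> qop \<Rightarrow> qop" where
  "op_scale c A = (\<lambda>x y. c * A x y)"

definition op_eq :: "nat \<Rightarrow> nat \<Rightarrow> qop \<Rightarrow> qop \<Rightarrow> bool" where
  "op_eq n d A B \<longleftrightarrow> (\<forall>x\<in>Conf n d. \<forall>y\<in>Conf n d. A x y = B x y)"

fun op_pow :: "nat \<Rightarrow> nat \<Rightarrow> qop \<Rightarrow> nat \<Rightarrow> qop" where
  "op_pow n d A 0 = op_id"
| "op_pow n d A (Suc k) = op_mult n d A (op_pow n d A k)"

definition omega :: "nat \<Rightarrow> complex" where
  "omega d = cis (2 * pi / real d)"

text \<open>Single-qudit gates as d x d kernels g m j = <m|g|j>.\<close>
definition gX :: "nat \<Rightarrow> nat \<Rightarrow> nat \<Rightarrow> complex" where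
  "gX d m j = (if m = (j + 1) mod d then 1 else 0)"

definition gZ :: "nat \<Rightarrow> nat \<Rightarrow> nat \<Rightarrow> complex" where
  "gZ d m j = (if m = j then omega d ^ j else 0)"

definition gF :: "nat \<Rightarrow> nat \<Rightarrow> nat \<Rightarrow> complex" where
  "gF d m j = omega d ^ (j * m) / complex_of_real (sqrt (real d))"

definition gS :: "nat \<Rightarrow> nat \<Rightarrow> nat \<Rightarrow> complex" where
  "gS d m j = (if m = j then omega d ^ (j * (j + 1) div 2) else 0)"

definition lift1 :: "nat \<Rightarrow> (nat \<Rightarrow> nat \<Rightarrow> complex) \<Rightarrow> qop" where
  "lift1 i g = (\<lambda>x y. if (\<forall>k. k \<noteq> i \<longrightarrow> x k = y k) then g (x i) (y i) else 0)"

definition CX :: "nat \<Rightarrow> nat \<Rightarrow> nat \<Rightarrow> qop" where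
  "CX d i k = (\<lambda>x y. if x i = y i \<and> x k = (y i + y k) mod d
                        \<and> (\<forall>m. m \<noteq> i \<and> m \<noteq> k \<longrightarrow> x m = y m) then 1 else 0)"

inductive circuit :: "nat \<Rightarrow> nat \<Rightarrow> qop \<Rightarrow> bool" for n d where
  circ_id: "circuit n d op_id"
| circ_F: "circuit n d M \<Longrightarrow> i < n \<Longrightarrow> circuit n d (op_mult n d (lift1 i (gF d)) M)"
| circ_S: "circuit n d M \<Longrightarrow> i < n \<Longrightarrow> circuit n d (op_mult n d (lift1 i (gS d)) M)"
| circ_CX: "circuit n d M \<Longrightarrow> i < n \<Longrightarrow> k < n \<Longrightarrow> i \<noteq> k \<Longrightarrow>
            circuit n d (op_mult n d (CX d i k) M)"

definition pauli :: "nat \<Rightarrow> nat \<Rightarrow> (nat \<Rightarrow> nat) \<Rightarrow> (nat \<Rightarrow> nat) \<Rightarrow> qop" where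
  "pauli n d a b = foldr (\<lambda>i A. op_mult n d (op_mult n d (op_pow n d (lift1 i (gZ d)) (a i))
                                             (op_pow n d (lift1 i (gX d)) (b i))) A)
                         [0..<n] op_id"

end

theory Submission
  imports Defs "HOL-Number_Theory.Number_Theory"
begin

lemma finite_Conf: "finite (Conf n d)"
proof -
  have "Conf n d \<subseteq> (\<lambda>f m. if m < n then f m else 0) ` (PiE {..<n} (\<lambda>_. {..<d}))"
  proof
    fix j assume j: "j \<in> Conf n d"
    have "restrict j {..<n} \<in> PiE {..<n} (\<lambda>_. {..<d})" using j by (auto simp: Conf_def)
    moreover have "j = (\<lambda>m. if m < n then restrict j {..<n} m else 0)"
      using j by (auto simp: Conf_def fun_eq_iff)
    ultimately show "j \<in> (\<lambda>f m. if m < n then f m else 0) ` (PiE {..<n} (\<lambda>_. {..<d}))" by blast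
  qed
  moreover have "finite (PiE {..<n} (\<lambda>_. {..<d::nat}))" by (rule finite_PiE) auto
  ultimately show ?thesis using finite_subset by blast
qed

lemma op_mult_assoc: "op_mult n d (op_mult n d A B) C = op_mult n d A (op_mult n d B C)"
  unfolding op_mult_def
  by (auto simp: fun_eq_iff sum_distrib_left sum_distrib_right mult.assoc intro: sum.swap)

lemma op_eq_refl[simp]: "op_eq n d A A" by (simp add: op_eq_def)
lemma op_eq_sym: "op_eq n d A B \<Longrightarrow> op_eq n d B A" by (simp add: op_eq_def)
lemma op_eq_trans: "op_eq n d A B \<Longrightarrow> op_eq n d B C \<Longrightarrow> op_eq n d A C" by (simp add: op_eq_def)
lemma op_eq_mult: "op_eq n d A A' \<Longrightarrow> op_eq n d B B' \<Longrightarrow> op_eq n d (op_mult n d A B) (op_mult n d A' B')"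
  by (simp add: op_eq_def op_mult_def)
lemma op_eq_scale: "op_eq n d A B \<Longrightarrow> op_eq n d (op_scale c A) (op_scale c B)"
  by (simp add: op_eq_def op_scale_def)
lemma scale_mult_left: "op_mult n d (op_scale c A) B = op_scale c (op_mult n d A B)"
  by (simp add: op_mult_def op_scale_def fun_eq_iff sum_distrib_left mult.assoc)
lemma scale_mult_right: "op_mult n d A (op_scale c B) = op_scale c (op_mult n d A B)"
  by (simp add: op_mult_def op_scale_def fun_eq_iff sum_distrib_left mult.assoc mult.left_commute)
lemma scale_scale: "op_scale c (op_scale c' A) = op_scale (c * c') A"
  by (simp add: op_scale_def fun_eq_iff)

lemma mult_id_right: "op_eq n d (op_mult n d A op_id) A"
  unfolding op_eq_def op_mult_def op_id_def
  by (simp add: finite_Conf if_distrib cong: if_cong)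

lemma mult_id_left: "op_eq n d (op_mult n d op_id A) A"
  unfolding op_eq_def op_mult_def op_id_def
proof (intro ballI)
  fix x y assume x: "x \<in> Conf n d"
  have "(\<Sum>z\<in>Conf n d. (if x = z then 1 else 0) * A z y) = (\<Sum>z\<in>Conf n d. if z = x then A x y else 0)"
    by (intro sum.cong) auto
  then show "(\<Sum>z\<in>Conf n d. (if x = z then 1 else 0) * A z y) = A x y" using x by (simp add: finite_Conf)
qed

definition colm :: "nat \<Rightarrow> nat \<Rightarrow> qop \<Rightarrow> ((nat \<Rightarrow> nat) \<Rightarrow> (nat \<Rightarrow> nat)) \<Rightarrow> ((nat \<Rightarrow> nat) \<Rightarrow> complex) \<Rightarrow> bool" where
  "colm n d B p b \<longleftrightarrow> (\<forall>y\<in>Conf n d. p y \<in> Conf n d) \<and>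
     (\<forall>z\<in>Conf n d. \<forall>y\<in>Conf n d. B z y = (if z = p y then b y else 0))"

lemma colm_mult:
  assumes "colm n d A p a" "colm n d B q b"
  shows "colm n d (op_mult n d A B) (p \<circ> q) (\<lambda>y. a (q y) * b y)"
  unfolding colm_def
proof (intro conjI ballI)
  fix y assume y: "y \<in> Conf n d"
  then show "(p \<circ> q) y \<in> Conf n d" using assms by (simp add: colm_def)
  fix z assume z: "z \<in> Conf n d"
  have qy: "q y \<in> Conf n d" using assms y by (simp add: colm_def)
  have "op_mult n d A B z y = (\<Sum>w\<in>Conf n d. if w = q y then A z (q y) * b y else 0)"
    unfolding op_mult_def using assms(2) y by (intro sum.cong) (auto simp: colm_def)
  also have "\<dots> = A z (q y) * b y" using qy by (simp add: finite_Conf)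
  also have "\<dots> = (if z = (p \<circ> q) y then a (q y) * b y else 0)"
    using assms(1) z qy by (simp add: colm_def)
  finally show "op_mult n d A B z y = (if z = (p \<circ> q) y then a (q y) * b y else 0)" .
qed

lemma colm_id: "colm n d op_id id (\<lambda>_. 1)"
  by (simp add: colm_def op_id_def)

lemma colm_scale: "colm n d A p a \<Longrightarrow> colm n d (op_scale c A) p (\<lambda>y. c * a y)"
  by (simp add: colm_def op_scale_def)

lemma colm_eq:
  assumes "colm n d A p a" "colm n d B q b" "\<And>y. y \<in> Conf n d \<Longrightarrow> p y = q y"
    "\<And>y. y \<in> Conf n d \<Longrightarrow> a y = b y"
  shows "op_eq n d A B"
  using assms by (simp add: colm_def op_eq_def)

definition mk :: "((nat \<Rightarrow> nat) \<Rightarrow> (nat \<Rightarrow> nat)) \<Rightarrow> ((nat \<Rightarrow> nat) \<Rightarrow> complex) \<Rightarrow> qop" where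
  "mk p b = (\<lambda>z y. if z = p y then b y else 0)"

lemma colm_mk: "(\<And>y. y \<in> Conf n d \<Longrightarrow> p y \<in> Conf n d) \<Longrightarrow> colm n d (mk p b) p b"
  by (simp add: colm_def mk_def)

lemma colm_cong: "colm n d A p a \<Longrightarrow> (\<And>y. y \<in> Conf n d \<Longrightarrow> p y = p' y) \<Longrightarrow>
   (\<And>y. y \<in> Conf n d \<Longrightarrow> a y = a' y) \<Longrightarrow> colm n d A p' a'"
  by (simp add: colm_def)

lemma omega_pow_d: "d > 0 \<Longrightarrow> omega d ^ d = 1"
  unfolding omega_def DeMoivre by simp

lemma omega_nz: "omega d \<noteq> 0"
  by (simp add: omega_def)

lemma omega_pow_mod: "d > 0 \<Longrightarrow> omega d ^ N = omega d ^ (N mod d)"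
proof -
  assume d: "d > 0"
  have "omega d ^ N = omega d ^ (d * (N div d) + N mod d)" by (simp only: mult_div_mod_eq)
  also have "\<dots> = (omega d ^ d) ^ (N div d) * omega d ^ (N mod d)" by (simp only: power_add power_mult)
  also have "\<dots> = omega d ^ (N mod d)" by (simp add: omega_pow_d d)
  finally show ?thesis .
qed

lemma omega_cong: "d > 0 \<Longrightarrow> [N = M] (mod d) \<Longrightarrow> omega d ^ N = omega d ^ M"
  unfolding cong_def by (metis omega_pow_mod)

lemma Conf_upd: "y \<in> Conf n d \<Longrightarrow> i < n \<Longrightarrow> v < d \<Longrightarrow> y(i := v) \<in> Conf n d"
  by (auto simp: Conf_def)

lemma upd_eq_iff: "(\<forall>k. k \<noteq> i \<longrightarrow> z k = y k) \<and> z i = v \<longleftrightarrow> z = y(i := v)"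
  by (auto simp: fun_eq_iff)

lemma colm_Z: "i < n \<Longrightarrow> colm n d (lift1 i (gZ d)) id (\<lambda>y. omega d ^ (y i))"
  unfolding colm_def lift1_def gZ_def
  by (auto simp: fun_eq_iff)

lemma colm_X: "i < n \<Longrightarrow> d > 0 \<Longrightarrow> colm n d (lift1 i (gX d)) (\<lambda>y. y(i := (y i + 1) mod d)) (\<lambda>_. 1)"
  unfolding colm_def lift1_def gX_def
  by (auto simp: Conf_upd upd_eq_iff[symmetric])

lemma colm_S: "i < n \<Longrightarrow> colm n d (lift1 i (gS d)) id (\<lambda>y. omega d ^ (y i * (y i + 1) div 2))"
  unfolding colm_def lift1_def gS_def
  by (auto simp: fun_eq_iff)

lemma colm_CX: "i < n \<Longrightarrow> k < n \<Longrightarrow> i \<noteq> k \<Longrightarrow> d > 0 \<Longrightarrow>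
   colm n d (CX d i k) (\<lambda>y. y(k := (y i + y k) mod d)) (\<lambda>_. 1)"
  unfolding colm_def CX_def
  by (auto simp: Conf_upd fun_eq_iff)

lemma colm_powZ: "i < n \<Longrightarrow> d > 0 \<Longrightarrow> colm n d (op_pow n d (lift1 i (gZ d)) p) id (\<lambda>y. omega d ^ (p * y i))"
proof (induction p)
  case 0
  show ?case unfolding op_pow.simps by (rule colm_cong[OF colm_id]) auto
next
  case (Suc p)
  show ?case
    unfolding op_pow.simps by (rule colm_cong[OF colm_mult[OF colm_Z[OF Suc.prems(1)] Suc.IH[OF Suc.prems]]]) (auto simp: power_add)
qed

lemma colm_powX: "i < n \<Longrightarrow> d > 0 \<Longrightarrow> colm n d (op_pow n d (lift1 i (gX d)) p) (\<lambda>y. y(i := (y i + p) mod d)) (\<lambda>_. 1)"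
proof (induction p)
  case 0
  then show ?case unfolding op_pow.simps by (intro colm_cong[OF colm_id]) (auto simp: Conf_def fun_eq_iff)
next
  case (Suc p)
  show ?case
    unfolding op_pow.simps by (rule colm_cong[OF colm_mult[OF colm_X[OF Suc.prems] Suc.IH[OF Suc.prems]]]) (auto simp: mod_simps)
qed

lemma colm_foldr:
  assumes "distinct xs" "set xs \<subseteq> {..<n}" "d > 0"
  shows "colm n d (foldr (\<lambda>i A. op_mult n d (op_mult n d (op_pow n d (lift1 i (gZ d)) (a i))
                                             (op_pow n d (lift1 i (gX d)) (b i))) A) xs op_id)
     (\<lambda>y m. if m \<in> set xs then (y m + b m) mod d else y m)
     (\<lambda>y. omega d ^ (\<Sum>m\<in>set xs. a m * ((y m + b m) mod d)))"
  using assms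
proof (induction xs)
  case Nil
  show ?case unfolding foldr.simps id_apply by (rule colm_cong[OF colm_id]) auto
next
  case (Cons i xs)
  have i: "i < n" "i \<notin> set xs" using Cons.prems by auto
  have ZX: "colm n d (op_mult n d (op_pow n d (lift1 i (gZ d)) (a i)) (op_pow n d (lift1 i (gX d)) (b i)))
     (id \<circ> (\<lambda>y. y(i := (y i + b i) mod d))) (\<lambda>y. omega d ^ (a i * ((y(i := (y i + b i) mod d)) i)) * 1)"
    by (rule colm_mult[OF colm_powZ colm_powX]) (use i Cons.prems in auto)
  have IH: "colm n d (foldr (\<lambda>i A. op_mult n d (op_mult n d (op_pow n d (lift1 i (gZ d)) (a i))
                                             (op_pow n d (lift1 i (gX d)) (b i))) A) xs op_id)
     (\<lambda>y m. if m \<in> set xs then (y m + b m) mod d else y m)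
     (\<lambda>y. omega d ^ (\<Sum>m\<in>set xs. a m * ((y m + b m) mod d)))"
    using Cons by auto
  show ?case
    unfolding foldr.simps o_apply
    by (rule colm_cong[OF colm_mult[OF ZX IH]]) (use i in \<open>auto simp: fun_eq_iff power_add\<close>)
qed

definition pshift :: "nat \<Rightarrow> nat \<Rightarrow> (nat \<Rightarrow> nat) \<Rightarrow> (nat \<Rightarrow> nat) \<Rightarrow> (nat \<Rightarrow> nat)" where
  "pshift n d b y = (\<lambda>m. if m < n then (y m + b m) mod d else y m)"

definition pphase :: "nat \<Rightarrow> nat \<Rightarrow> (nat \<Rightarrow> nat) \<Rightarrow> (nat \<Rightarrow> nat) \<Rightarrow> (nat \<Rightarrow> nat) \<Rightarrow> complex" where
  "pphase n d a b y = omega d ^ (\<Sum>m<n. a m * ((y m + b m) mod d))"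

lemma colm_pauli: "d > 0 \<Longrightarrow> colm n d (pauli n d a b) (pshift n d b) (pphase n d a b)"
  unfolding pauli_def
  by (rule colm_cong[OF colm_foldr]) (auto simp: pshift_def pphase_def atLeast0LessThan)

lemma S_cong:
  fixes X Y b d :: nat
  assumes "odd d" "X = (Y + b) mod d"
  shows "[X * (X + 1) div 2 + b * (b - 1) div 2 = b * X + Y * (Y + 1) div 2] (mod d)"
proof -
  have hX: "[X = Y + b] (mod d)" using assms(2) by (simp add: cong_def)
  have e1: "2 * (X * (X + 1) div 2) = X * (X + 1)" by simp
  have e2: "2 * (b * (b - 1) div 2) = b * (b - 1)" by (cases b) auto
  have e3: "2 * (Y * (Y + 1) div 2) = Y * (Y + 1)" by simp
  have e4: "b * (b - 1) + b = b * b" by (cases b) auto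
  have c1: "[X*X + X + b*b = (Y+b)*(Y+b) + (Y+b) + b*b] (mod d)"
    by (intro cong_add cong_mult hX cong_refl)
  have c2: "[2*b*X + Y*Y + Y + b = 2*b*(Y+b) + Y*Y + Y + b] (mod d)"
    by (intro cong_add cong_mult hX cong_refl)
  have eq: "(Y+b)*(Y+b) + (Y+b) + b*b = 2*b*(Y+b) + Y*Y + Y + b" by (simp add: algebra_simps)
  have "[X*X + X + b*b = 2*b*X + Y*Y + Y + b] (mod d)"
    using c1 c2 eq by (metis cong_sym cong_trans)
  then have "[2 * (X * (X + 1) div 2 + b * (b - 1) div 2) + b = 2 * (b * X + Y * (Y + 1) div 2) + b] (mod d)"
  proof -
    have l: "2 * (X * (X + 1) div 2 + b * (b - 1) div 2) + b = X*X + X + b*b"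
    proof -
      have "2 * (X * (X + 1) div 2 + b * (b - 1) div 2) + b = X*(X+1) + (b*(b-1) + b)"
        by (simp only: add_mult_distrib2[of 2 "X * (X + 1) div 2"] e1 e2 add.assoc)
      also have "\<dots> = X*X + X + b*b" by (subst e4) (simp add: distrib_left)
      finally show ?thesis .
    qed
    have r: "2 * (b * X + Y * (Y + 1) div 2) + b = 2*b*X + Y*Y + Y + b"
    proof -
      have "2 * (b * X + Y * (Y + 1) div 2) + b = 2*b*X + Y*(Y+1) + b"
        by (simp only: add_mult_distrib2[of 2 "b * X"] e3 mult.assoc)
      also have "\<dots> = 2*b*X + Y*Y + Y + b" by (simp add: distrib_left)
      finally show ?thesis .
    qed
    show ?thesis using \<open>[X*X + X + b*b = 2*b*X + Y*Y + Y + b] (mod d)\<close> unfolding l r .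
  qed
  then have "[2 * (X * (X + 1) div 2 + b * (b - 1) div 2) = 2 * (b * X + Y * (Y + 1) div 2)] (mod d)"
    by (simp add: cong_add_rcancel_nat)
  moreover have "coprime 2 d" using assms(1) by (simp add: coprime_commute)
  ultimately show ?thesis by (metis cong_mult_lcancel_nat)
qed

lemma sum_upd: "(j::nat) < n \<Longrightarrow> (\<Sum>m<n. (g(j := v)) m) + g j = (\<Sum>m<n. g m) + (v::nat)"
proof -
  assume j: "j < n"
  have "(\<Sum>m<n. (g(j := v)) m) = (g(j := v)) j + (\<Sum>m\<in>{..<n}-{j}. (g(j := v)) m)"
    using j by (subst sum.remove[OF finite_lessThan, where x = j]) auto
  moreover have "(\<Sum>m<n. g m) = g j + (\<Sum>m\<in>{..<n}-{j}. g m)"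
    using j by (subst sum.remove[OF finite_lessThan, where x = j]) auto
  moreover have "(\<Sum>m\<in>{..<n}-{j}. (g(j := v)) m) = (\<Sum>m\<in>{..<n}-{j}. g m)"
    by (intro sum.cong) auto
  ultimately show ?thesis by simp
qed

lemma fin_alg: "(w::complex) \<noteq> 0 \<Longrightarrow> p * w = q * r \<Longrightarrow> p * s = inverse w * ((s * q) * r)"
  by (simp add: field_simps)

definition Sinv :: "nat \<Rightarrow> nat \<Rightarrow> qop" where
  "Sinv d j = mk id (\<lambda>y. inverse (omega d ^ (y j * (y j + 1) div 2)))"

lemma S_inv:
  assumes "j < n"
  shows "op_eq n d (op_mult n d (lift1 j (gS d)) (Sinv d j)) op_id"
    "op_eq n d (op_mult n d (Sinv d j) (lift1 j (gS d))) op_id"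
proof -
  have c: "colm n d (Sinv d j) id (\<lambda>y. inverse (omega d ^ (y j * (y j + 1) div 2)))"
    unfolding Sinv_def by (rule colm_mk) simp
  show "op_eq n d (op_mult n d (lift1 j (gS d)) (Sinv d j)) op_id"
    by (rule colm_eq[OF colm_mult[OF colm_S[OF assms] c] colm_id]) (auto simp: omega_nz)
  show "op_eq n d (op_mult n d (Sinv d j) (lift1 j (gS d))) op_id"
    by (rule colm_eq[OF colm_mult[OF c colm_S[OF assms]] colm_id]) (auto simp: omega_nz)
qed

lemma conj_S:
  assumes "j < n" "odd d"
  shows "\<exists>lam. op_eq n d (op_mult n d (lift1 j (gS d)) (pauli n d a b))
            (op_scale lam (op_mult n d (pauli n d (a(j := a j + b j)) b) (lift1 j (gS d))))"
proof
  have d: "d > 0" using assms(2) by (cases d) auto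
  let ?lam = "inverse (omega d ^ (b j * (b j - 1) div 2))"
  show "op_eq n d (op_mult n d (lift1 j (gS d)) (pauli n d a b))
            (op_scale ?lam (op_mult n d (pauli n d (a(j := a j + b j)) b) (lift1 j (gS d))))"
  proof (rule colm_eq[OF colm_mult[OF colm_S[OF assms(1)] colm_pauli[OF d]]
         colm_scale[OF colm_mult[OF colm_pauli[OF d] colm_S[OF assms(1)]]]])
    fix y assume y: "y \<in> Conf n d"
    show "(id \<circ> pshift n d b) y = (pshift n d b \<circ> id) y" by simp
    define X where "X = (y j + b j) mod d"
    define A where "A = (\<Sum>m<n. a m * ((y m + b m) mod d))"
    have px: "pshift n d b y j = X" using assms(1) by (simp add: pshift_def X_def)
    have sa: "(\<Sum>m<n. (a(j := a j + b j)) m * ((y m + b m) mod d)) = A + b j * X"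
    proof -
      have "(\<Sum>m<n. (a(j := a j + b j)) m * ((y m + b m) mod d)) =
            (\<Sum>m<n. ((\<lambda>m. a m * ((y m + b m) mod d))(j := (a j + b j) * X)) m)"
        by (intro sum.cong) (auto simp: X_def)
      moreover have "(\<Sum>m<n. ((\<lambda>m. a m * ((y m + b m) mod d))(j := (a j + b j) * X)) m) + a j * X
          = A + (a j + b j) * X"
        using sum_upd[OF assms(1), of "\<lambda>m. a m * ((y m + b m) mod d)"] by (simp add: A_def X_def)
      ultimately show ?thesis by (simp add: algebra_simps)
    qed
    have cg: "omega d ^ (X * (X + 1) div 2 + b j * (b j - 1) div 2) = omega d ^ (b j * X + y j * (y j + 1) div 2)"
      by (rule omega_cong[OF d S_cong[OF assms(2) X_def]])
    have cg': "omega d ^ (X * (X + 1) div 2) * omega d ^ (b j * (b j - 1) div 2) = omega d ^ (b j * X) * omega d ^ (y j * (y j + 1) div 2)"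
      using cg by (simp add: power_add)
    show "omega d ^ (pshift n d b y j * (pshift n d b y j + 1) div 2) * pphase n d a b y =
         ?lam * (pphase n d (a(j := a j + b j)) b (id y) * omega d ^ (y j * (y j + 1) div 2))"
      unfolding px pphase_def id_apply sa A_def[symmetric] power_add
      by (rule fin_alg[OF _ cg']) (simp add: omega_nz)
  qed
qed

definition CXinv :: "nat \<Rightarrow> nat \<Rightarrow> nat \<Rightarrow> qop" where
  "CXinv d i k = mk (\<lambda>y. y(k := (y k + (d - 1) * y i) mod d)) (\<lambda>_. 1)"

lemma cx_arith1: "(d::nat) > 0 \<Longrightarrow> yk < d \<Longrightarrow> (yi + (yk + (d - 1) * yi) mod d) mod d = yk"
proof -
  assume d: "d > 0" "yk < d"
  have "yi + (yk + (d - 1) * yi) = yk + d * yi" using d by (cases d) (auto simp: algebra_simps)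
  then show ?thesis using d by (metis mod_add_right_eq mod_less mod_mult_self2)
qed

lemma cx_arith2: "(d::nat) > 0 \<Longrightarrow> yk < d \<Longrightarrow> ((yi + yk) mod d + (d - 1) * yi) mod d = yk"
proof -
  assume d: "d > 0" "yk < d"
  have "(yi + yk) + (d - 1) * yi = yk + d * yi" using d by (cases d) (auto simp: algebra_simps)
  then show ?thesis using d by (metis mod_add_left_eq mod_less mod_mult_self2)
qed

lemma mod_helper: "((p::nat) + (q + r mod d)) mod d = (p + q + r) mod d"
  by (metis add.assoc mod_add_right_eq)

lemma CX_inv:
  assumes "i < n" "k < n" "i \<noteq> k" "d > 0"
  shows "op_eq n d (op_mult n d (CX d i k) (CXinv d i k)) op_id"
    "op_eq n d (op_mult n d (CXinv d i k) (CX d i k)) op_id"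
proof -
  have c: "colm n d (CXinv d i k) (\<lambda>y. y(k := (y k + (d - 1) * y i) mod d)) (\<lambda>_. 1)"
    unfolding CXinv_def by (rule colm_mk) (use assms in \<open>auto intro: Conf_upd\<close>)
  show "op_eq n d (op_mult n d (CX d i k) (CXinv d i k)) op_id"
    by (rule colm_eq[OF colm_mult[OF colm_CX[OF assms] c] colm_id])
      (use assms in \<open>auto simp: fun_eq_iff cx_arith1[simplified] Conf_def\<close>)
  show "op_eq n d (op_mult n d (CXinv d i k) (CX d i k)) op_id"
    by (rule colm_eq[OF colm_mult[OF c colm_CX[OF assms]] colm_id])
      (use assms in \<open>auto simp: fun_eq_iff cx_arith2[simplified] Conf_def\<close>)
qed

lemma conj_CX:
  assumes "i < n" "k < n" "i \<noteq> k" "d > 0"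
  shows "\<exists>lam. op_eq n d (op_mult n d (CX d i k) (pauli n d a b))
            (op_scale lam (op_mult n d (pauli n d (a(i := a i + (d - 1) * a k)) (b(k := b k + b i))) (CX d i k)))"
proof
  let ?a = "a(i := a i + (d - 1) * a k)" and ?b = "b(k := b k + b i)"
  show "op_eq n d (op_mult n d (CX d i k) (pauli n d a b))
            (op_scale 1 (op_mult n d (pauli n d ?a ?b) (CX d i k)))"
  proof (rule colm_eq[OF colm_mult[OF colm_CX[OF assms] colm_pauli[OF assms(4)]]
         colm_scale[OF colm_mult[OF colm_pauli[OF assms(4)] colm_CX[OF assms]]]])
    fix y assume y: "y \<in> Conf n d"
    define x where "x = pshift n d b y"
    have peq: "((\<lambda>y. y(k := (y i + y k) mod d)) \<circ> pshift n d b) y =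
          (pshift n d ?b \<circ> (\<lambda>y. y(k := (y i + y k) mod d))) y"
      using assms by (auto simp: pshift_def fun_eq_iff mod_helper mod_add_eq ac_simps)
    then show "((\<lambda>y. y(k := (y i + y k) mod d)) \<circ> pshift n d b) y =
          (pshift n d ?b \<circ> (\<lambda>y. y(k := (y i + y k) mod d))) y" .
    define g where "g = (\<lambda>m. a m * x m)"
    have xi: "x i = (y i + b i) mod d" using assms by (simp add: x_def pshift_def)
    have sum1: "(\<Sum>m<n. a m * ((y m + b m) mod d)) = sum g {..<n}"
      by (intro sum.cong) (auto simp: g_def x_def pshift_def)
    have sum2: "(\<Sum>m<n. ?a m * (((y(k := (y i + y k) mod d)) m + ?b m) mod d)) =
       (\<Sum>m<n. (g(i := (a i + (d - 1) * a k) * x i, k := a k * ((x i + x k) mod d))) m)"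
    proof (intro sum.cong refl)
      fix m assume m: "m \<in> {..<n}"
      have "((y(k := (y i + y k) mod d)) m + ?b m) mod d = pshift n d ?b (y(k := (y i + y k) mod d)) m"
        using m by (simp add: pshift_def)
      also have "\<dots> = (x(k := (x i + x k) mod d)) m"
        using fun_cong[OF peq, of m] by (simp add: x_def)
      finally show "?a m * (((y(k := (y i + y k) mod d)) m + ?b m) mod d) =
         (g(i := (a i + (d - 1) * a k) * x i, k := a k * ((x i + x k) mod d))) m"
        using assms by (auto simp: g_def)
    qed
    have u1: "sum (g(i := (a i + (d - 1) * a k) * x i, k := a k * ((x i + x k) mod d))) {..<n} + g k
       = sum (g(i := (a i + (d - 1) * a k) * x i)) {..<n} + a k * ((x i + x k) mod d)"
      using sum_upd[OF assms(2), of "g(i := (a i + (d - 1) * a k) * x i)"] assms(3) by simp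
    have u2: "sum (g(i := (a i + (d - 1) * a k) * x i)) {..<n} + g i = sum g {..<n} + (a i + (d - 1) * a k) * x i"
      using sum_upd[OF assms(1), of g] by simp
    have c1: "[(a i + (d - 1) * a k) * x i + a k * ((x i + x k) mod d) = g i + g k] (mod d)"
    proof -
      have "[(a i + (d - 1) * a k) * x i + a k * ((x i + x k) mod d) = (a i + (d - 1) * a k) * x i + a k * (x i + x k)] (mod d)"
        by (intro cong_add cong_mult cong_refl) (simp add: cong_def)
      moreover have "(a i + (d - 1) * a k) * x i + a k * (x i + x k) = d * (a k * x i) + (g i + g k)"
        using assms(4) by (cases d) (auto simp: g_def algebra_simps)
      moreover have "[d * (a k * x i) + (g i + g k) = g i + g k] (mod d)"
        by (simp add: cong_def)
      ultimately show ?thesis by (metis cong_trans)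
    qed
    have "[sum (g(i := (a i + (d - 1) * a k) * x i, k := a k * ((x i + x k) mod d))) {..<n} + (g k + g i)
       = sum g {..<n} + (g i + g k)] (mod d)"
    proof -
      have "sum (g(i := (a i + (d - 1) * a k) * x i, k := a k * ((x i + x k) mod d))) {..<n} + (g k + g i)
         = sum g {..<n} + ((a i + (d - 1) * a k) * x i + a k * ((x i + x k) mod d))"
        using u1 u2 by simp
      then show ?thesis using c1 by (simp add: cong_add)
    qed
    then have "[sum (g(i := (a i + (d - 1) * a k) * x i, k := a k * ((x i + x k) mod d))) {..<n}
       = sum g {..<n}] (mod d)"
      by (metis add.commute cong_add_rcancel_nat)
    then show "1 * pphase n d a b y = 1 * (pphase n d ?a ?b ((\<lambda>y. y(k := (y i + y k) mod d)) y) * 1)"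
      unfolding pphase_def sum1 sum2 using omega_cong[OF assms(4)] by (metis mult_1_left mult_1_right cong_sym)
  qed
qed

declare op_eq_trans[trans]

lemma op_eq_of_eq: "A = B \<Longrightarrow> op_eq n d A B" by simp

lemma scale_one: "op_scale 1 A = A" by (simp add: op_scale_def)

lemma conj_step:
  assumes h1: "op_eq n d (op_mult n d (op_mult n d M P0) Minv) (op_scale lam P1)"
    and h2: "op_eq n d (op_mult n d G P1) (op_scale l (op_mult n d P2 G))"
    and h3: "op_eq n d (op_mult n d G Ginv) op_id"
  shows "op_eq n d (op_mult n d (op_mult n d (op_mult n d G M) P0) (op_mult n d Minv Ginv)) (op_scale (lam * l) P2)"
proof -
  have "op_eq n d (op_mult n d (op_mult n d (op_mult n d G M) P0) (op_mult n d Minv Ginv))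
        (op_mult n d G (op_mult n d (op_mult n d (op_mult n d M P0) Minv) Ginv))"
    by (rule op_eq_of_eq) (simp add: op_mult_assoc)
  also have "op_eq n d \<dots> (op_mult n d G (op_mult n d (op_scale lam P1) Ginv))"
    by (rule op_eq_mult[OF op_eq_refl op_eq_mult[OF h1 op_eq_refl]])
  also have "op_eq n d (op_mult n d G (op_mult n d (op_scale lam P1) Ginv)) (op_scale lam (op_mult n d (op_mult n d G P1) Ginv))"
    by (rule op_eq_of_eq) (simp add: scale_mult_left scale_mult_right op_mult_assoc)
  also have "op_eq n d \<dots> (op_scale lam (op_mult n d (op_scale l (op_mult n d P2 G)) Ginv))"
    by (rule op_eq_scale[OF op_eq_mult[OF h2 op_eq_refl]])
  also have "op_eq n d (op_scale lam (op_mult n d (op_scale l (op_mult n d P2 G)) Ginv)) (op_scale (lam * l) (op_mult n d P2 (op_mult n d G Ginv)))"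
    by (rule op_eq_of_eq) (simp add: scale_mult_left scale_scale op_mult_assoc)
  also have "op_eq n d \<dots> (op_scale (lam * l) (op_mult n d P2 op_id))"
    by (rule op_eq_scale[OF op_eq_mult[OF op_eq_refl h3]])
  also have "op_eq n d \<dots> (op_scale (lam * l) P2)"
    by (rule op_eq_scale[OF mult_id_right])
  finally show ?thesis .
qed

lemma inv_step:
  assumes "op_eq n d (op_mult n d M Minv) op_id" "op_eq n d (op_mult n d Minv M) op_id"
    "op_eq n d (op_mult n d G Ginv) op_id" "op_eq n d (op_mult n d Ginv G) op_id"
  shows "op_eq n d (op_mult n d (op_mult n d G M) (op_mult n d Minv Ginv)) op_id"
    "op_eq n d (op_mult n d (op_mult n d Minv Ginv) (op_mult n d G M)) op_id"
proof -
  have "op_eq n d (op_mult n d (op_mult n d G M) (op_mult n d Minv Ginv)) (op_mult n d G (op_mult n d (op_mult n d M Minv) Ginv))"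
    by (rule op_eq_of_eq) (simp add: op_mult_assoc)
  also have "op_eq n d \<dots> (op_mult n d G (op_mult n d op_id Ginv))"
    by (rule op_eq_mult[OF op_eq_refl op_eq_mult[OF assms(1) op_eq_refl]])
  also have "op_eq n d \<dots> (op_mult n d G Ginv)"
    by (rule op_eq_mult[OF op_eq_refl mult_id_left])
  also have "op_eq n d \<dots> op_id" by (rule assms(3))
  finally show "op_eq n d (op_mult n d (op_mult n d G M) (op_mult n d Minv Ginv)) op_id" .
  have "op_eq n d (op_mult n d (op_mult n d Minv Ginv) (op_mult n d G M)) (op_mult n d Minv (op_mult n d (op_mult n d Ginv G) M))"
    by (rule op_eq_of_eq) (simp add: op_mult_assoc)
  also have "op_eq n d \<dots> (op_mult n d Minv (op_mult n d op_id M))"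
    by (rule op_eq_mult[OF op_eq_refl op_eq_mult[OF assms(4) op_eq_refl]])
  also have "op_eq n d \<dots> (op_mult n d Minv M)"
    by (rule op_eq_mult[OF op_eq_refl mult_id_left])
  also have "op_eq n d \<dots> op_id" by (rule assms(2))
  finally show "op_eq n d (op_mult n d (op_mult n d Minv Ginv) (op_mult n d G M)) op_id" .
qed

type_synonym pr = "(nat \<Rightarrow> nat) \<times> (nat \<Rightarrow> nat)"

fun smap :: "nat \<Rightarrow> pr \<Rightarrow> pr" where
  "smap j (a, b) = (a(j := a j + b j), b)"

fun cmap :: "nat \<Rightarrow> nat \<Rightarrow> nat \<Rightarrow> pr \<Rightarrow> pr" where
  "cmap d i k (a, b) = (a(i := a i + (d - 1) * a k), b(k := b k + b i))"

inductive reach :: "nat \<Rightarrow> nat \<Rightarrow> pr \<times> pr \<Rightarrow> pr \<times> pr \<Rightarrow> bool" for n d v0 where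
  r0: "reach n d v0 v0"
| rS: "reach n d v0 (p, q) \<Longrightarrow> j < n \<Longrightarrow> reach n d v0 (smap j p, smap j q)"
| rC: "reach n d v0 (p, q) \<Longrightarrow> i < n \<Longrightarrow> k < n \<Longrightarrow> i \<noteq> k \<Longrightarrow> reach n d v0 (cmap d i k p, cmap d i k q)"

definition goodop :: "nat \<Rightarrow> nat \<Rightarrow> pr \<times> pr \<Rightarrow> pr \<times> pr \<Rightarrow> bool" where
  "goodop n d v0 v \<longleftrightarrow> (\<exists>M Minv. circuit n d M
           \<and> op_eq n d (op_mult n d M Minv) op_id \<and> op_eq n d (op_mult n d Minv M) op_id
           \<and> (\<exists>lam mu :: complex.
                op_eq n d (op_mult n d (op_mult n d M (pauli n d (fst (fst v0)) (snd (fst v0)))) Minv)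
                   (op_scale lam (pauli n d (fst (fst v)) (snd (fst v))))
              \<and> op_eq n d (op_mult n d (op_mult n d M (pauli n d (fst (snd v0)) (snd (snd v0)))) Minv)
                   (op_scale mu (pauli n d (fst (snd v)) (snd (snd v))))))"

lemma gate_step:
  assumes "goodop n d v0 (p, q)"
    and "\<And>M. circuit n d M \<Longrightarrow> circuit n d (op_mult n d G M)"
    and "op_eq n d (op_mult n d G Ginv) op_id" "op_eq n d (op_mult n d Ginv G) op_id"
    and "\<And>a b. \<exists>l. op_eq n d (op_mult n d G (pauli n d a b)) (op_scale l (op_mult n d (pauli n d (fst (f (a, b))) (snd (f (a, b)))) G))"
  shows "goodop n d v0 (f p, f q)"
proof -
  obtain M Minv lam mu where c: "circuit n d M" and i1: "op_eq n d (op_mult n d M Minv) op_id"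
    and i2: "op_eq n d (op_mult n d Minv M) op_id"
    and h1: "op_eq n d (op_mult n d (op_mult n d M (pauli n d (fst (fst v0)) (snd (fst v0)))) Minv)
                   (op_scale lam (pauli n d (fst p) (snd p)))"
    and h2: "op_eq n d (op_mult n d (op_mult n d M (pauli n d (fst (snd v0)) (snd (snd v0)))) Minv)
                   (op_scale mu (pauli n d (fst q) (snd q)))"
    using assms(1) unfolding goodop_def by auto
  obtain l1 where l1: "op_eq n d (op_mult n d G (pauli n d (fst p) (snd p))) (op_scale l1 (op_mult n d (pauli n d (fst (f p)) (snd (f p))) G))"
    using assms(5)[of "fst p" "snd p"] by auto
  obtain l2 where l2: "op_eq n d (op_mult n d G (pauli n d (fst q) (snd q))) (op_scale l2 (op_mult n d (pauli n d (fst (f q)) (snd (f q))) G))"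
    using assms(5)[of "fst q" "snd q"] by auto
  have A: "circuit n d (op_mult n d G M)" using assms(2)[OF c] .
  note B = inv_step[OF i1 i2 assms(3,4)]
  note D = conj_step[OF h1 l1 assms(3)]
  note E = conj_step[OF h2 l2 assms(3)]
  show ?thesis
    unfolding goodop_def fst_conv snd_conv using A B D E by blast
qed

lemma reach_goodop:
  assumes "reach n d v0 v" "odd d"
  shows "goodop n d v0 v"
  using assms(1)
proof (induction rule: reach.induct)
  case r0
  have "op_eq n d (op_mult n d (op_mult n d op_id P) op_id) (op_scale 1 P)" for P
    unfolding scale_one by (rule op_eq_trans[OF mult_id_right mult_id_left])
  then show ?case unfolding goodop_def
    by (intro exI[of _ op_id] conjI circuit.circ_id mult_id_right) auto
next
  case (rS p q j)
  show ?case
  proof (rule gate_step[OF rS.IH, where G = "lift1 j (gS d)" and Ginv = "Sinv d j" and f = "smap j"])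
    show "circuit n d (op_mult n d (lift1 j (gS d)) M)" if "circuit n d M" for M
      using circuit.circ_S[OF that rS.hyps(2)] .
    show "op_eq n d (op_mult n d (lift1 j (gS d)) (Sinv d j)) op_id" by (rule S_inv(1)[OF rS.hyps(2)])
    show "op_eq n d (op_mult n d (Sinv d j) (lift1 j (gS d))) op_id" by (rule S_inv(2)[OF rS.hyps(2)])
    fix a b
    show "\<exists>l. op_eq n d (op_mult n d (lift1 j (gS d)) (pauli n d a b))
       (op_scale l (op_mult n d (pauli n d (fst (smap j (a, b))) (snd (smap j (a, b)))) (lift1 j (gS d))))"
      using conj_S[OF rS.hyps(2) assms(2), of a b] by simp
  qed
next
  case (rC p q i k)
  have d: "d > 0" using assms(2) by (cases d) auto
  show ?case
  proof (rule gate_step[OF rC.IH, where G = "CX d i k" and Ginv = "CXinv d i k" and f = "cmap d i k"])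
    show "circuit n d (op_mult n d (CX d i k) M)" if "circuit n d M" for M
      using circuit.circ_CX[OF that rC.hyps(2,3,4)] .
    show "op_eq n d (op_mult n d (CX d i k) (CXinv d i k)) op_id" by (rule CX_inv(1)[OF rC.hyps(2,3,4) d])
    show "op_eq n d (op_mult n d (CXinv d i k) (CX d i k)) op_id" by (rule CX_inv(2)[OF rC.hyps(2,3,4) d])
    fix a b
    show "\<exists>l. op_eq n d (op_mult n d (CX d i k) (pauli n d a b))
       (op_scale l (op_mult n d (pauli n d (fst (cmap d i k (a, b))) (snd (cmap d i k (a, b)))) (CX d i k)))"
      using conj_CX[OF rC.hyps(2,3,4) d, of a b] by simp
  qed
qed

definition spf :: "nat \<Rightarrow> nat \<Rightarrow> pr \<times> pr \<Rightarrow> int" where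
  "spf n d v = (\<Sum>i<n. int (fst (fst v) i * snd (snd v) i) - int (snd (fst v) i * fst (snd v) i)) mod int d"

lemma sum_upd_int: "(j::nat) < n \<Longrightarrow> (\<Sum>m<n. (g(j := v)) m) = (\<Sum>m<n. g m) - g j + (v::int)"
proof -
  assume j: "j < n"
  have "(\<Sum>m<n. (g(j := v)) m) = (g(j := v)) j + (\<Sum>m\<in>{..<n}-{j}. (g(j := v)) m)"
    using j by (subst sum.remove[OF finite_lessThan, where x = j]) auto
  moreover have "(\<Sum>m<n. g m) = g j + (\<Sum>m\<in>{..<n}-{j}. g m)"
    using j by (subst sum.remove[OF finite_lessThan, where x = j]) auto
  moreover have "(\<Sum>m\<in>{..<n}-{j}. (g(j := v)) m) = (\<Sum>m\<in>{..<n}-{j}. g m)"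
    by (intro sum.cong) auto
  ultimately show ?thesis by simp
qed

lemma reach_spf: "reach n d v0 v \<Longrightarrow> d > 0 \<Longrightarrow> spf n d v = spf n d v0"
proof (induction rule: reach.induct)
  case r0
  then show ?case by simp
next
  case (rS p q j)
  obtain a b where p: "p = (a, b)" by (cases p)
  obtain c e where q: "q = (c, e)" by (cases q)
  have "(\<Sum>i<n. int (fst (smap j p) i * snd (smap j q) i) - int (snd (smap j p) i * fst (smap j q) i)) =
        (\<Sum>i<n. int (fst p i * snd q i) - int (snd p i * fst q i))"
    unfolding p q by (intro sum.cong) (auto simp: algebra_simps)
  then show ?case using rS by (simp add: spf_def)
next
  case (rC p q i k)
  obtain a b where p: "p = (a, b)" by (cases p)
  obtain c e where q: "q = (c, e)" by (cases q)
  define f where "f = (\<lambda>m. int (a m * e m) - int (b m * c m))"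
  define t where "t = int (a k * e i) - int (b i * c k)"
  have fe: "(\<lambda>m. int (fst (cmap d i k p) m * snd (cmap d i k q) m) - int (snd (cmap d i k p) m * fst (cmap d i k q) m))
      = f(i := f i + (int d - 1) * t, k := f k + t)"
  proof -
    obtain d' where d': "d = Suc d'" using rC.prems by (cases d) auto
    show ?thesis
      using rC.hyps unfolding p q f_def t_def d'
      by (auto simp: fun_eq_iff algebra_simps)
  qed
  have "(\<Sum>m<n. (f(i := f i + (int d - 1) * t, k := f k + t)) m) = (\<Sum>m<n. f m) + int d * t"
  proof -
    have s1: "(\<Sum>m<n. (f(i := f i + (int d - 1) * t, k := f k + t)) m) =
        (\<Sum>m<n. (f(i := f i + (int d - 1) * t)) m) - (f(i := f i + (int d - 1) * t)) k + (f k + t)"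
      by (rule sum_upd_int) (rule rC.hyps)
    have s2: "(\<Sum>m<n. (f(i := f i + (int d - 1) * t)) m) = (\<Sum>m<n. f m) - f i + (f i + (int d - 1) * t)"
      by (rule sum_upd_int) (rule rC.hyps)
    show ?thesis unfolding s1 s2 using rC.hyps by (simp add: algebra_simps)
  qed
  then have "(\<Sum>m<n. int (fst (cmap d i k p) m * snd (cmap d i k q) m) - int (snd (cmap d i k p) m * fst (cmap d i k q) m))
     mod int d = (\<Sum>m<n. f m) mod int d"
    unfolding fe by simp
  then show ?case using rC by (simp add: spf_def p q f_def)
qed

lemma cmap_pow: "i \<noteq> k \<Longrightarrow> (cmap d i k ^^ m) (a, b) = (a(i := a i + m * ((d - 1) * a k)), b(k := b k + m * b i))"
  by (induction m) (auto simp: fun_eq_iff add_ac)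

lemma reach_cpow: "reach n d v0 (p, q) \<Longrightarrow> i < n \<Longrightarrow> k < n \<Longrightarrow> i \<noteq> k \<Longrightarrow>
    reach n d v0 ((cmap d i k ^^ m) p, (cmap d i k ^^ m) q)"
  by (induction m) (auto intro: reach.rC)

lemma solve_mod:
  assumes "prime (d::nat)" "\<not> d dvd u"
  shows "\<exists>m. (t + m * u) mod d = 0"
proof -
  have "coprime u d" using assms by (simp add: prime_imp_coprime coprime_commute)
  then obtain x where x: "[u * x = Suc 0] (mod d)" using cong_solve_coprime_nat by blast
  define m where "m = x * (d - t mod d)"
  have "[m * u = (d - t mod d) * (u * x)] (mod d)" by (simp add: m_def algebra_simps)
  moreover have "[(d - t mod d) * (u * x) = (d - t mod d) * 1] (mod d)"
    using x by (intro cong_mult cong_refl) simp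
  ultimately have "[t + m * u = t + (d - t mod d)] (mod d)"
    by (metis cong_add cong_refl cong_trans mult_1_right)
  moreover have "t + (d - t mod d) = d * (t div d + 1)"
  proof -
    have "t mod d \<le> d" using assms(1) by (simp add: prime_gt_0_nat less_imp_le)
    then show ?thesis by (metis add.commute add_diff_assoc div_mult_mod_eq mult.commute
          mult_Suc_right add.left_commute diff_add_inverse Suc_eq_plus1)
  qed
  ultimately show ?thesis by (metis cong_def mod_mult_self1_is_0)
qed

lemma stepA1:
  assumes "reach n d v0 (p, q)" "j < n" "prime d"
    and "snd p j mod d \<noteq> 0"
  shows "\<exists>p' q'. reach n d v0 (p', q') \<and> snd p' j = snd p j \<and> (\<forall>k<n. k \<noteq> j \<longrightarrow> snd p' k mod d = 0)"
proof -
  have "t \<le> n \<Longrightarrow> \<exists>p' q'. reach n d v0 (p', q') \<and> snd p' j = snd p j \<and> (\<forall>k<t. k \<noteq> j \<longrightarrow> snd p' k mod d = 0)" for t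
  proof (induction t)
    case 0
    then show ?case using assms(1) by blast
  next
    case (Suc t)
    then obtain p' q' where r: "reach n d v0 (p', q')" and bj: "snd p' j = snd p j"
      and z: "\<forall>k<t. k \<noteq> j \<longrightarrow> snd p' k mod d = 0" by auto
    show ?case
    proof (cases "t = j")
      case True
      then show ?thesis using r bj z by (metis less_Suc_eq)
    next
      case False
      have "\<not> d dvd snd p' j" using assms(4) bj by (simp add: dvd_eq_mod_eq_0)
      then have "\<exists>m. (snd p' t + m * snd p' j) mod d = 0" by (rule solve_mod[OF assms(3)])
      then obtain m where m: "(snd p' t + m * snd p' j) mod d = 0" by (rule exE)
      obtain a b where ab: "p' = (a, b)" by (cases p')
      have r2: "reach n d v0 ((cmap d j t ^^ m) p', (cmap d j t ^^ m) q')"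
        by (rule reach_cpow[OF r assms(2)]) (use Suc.prems False in auto)
      show ?thesis
        apply (rule exI[of _ "(cmap d j t ^^ m) p'"], rule exI[of _ "(cmap d j t ^^ m) q'"])
        using r2 bj z m False unfolding ab by (auto simp: cmap_pow less_Suc_eq)
    qed
  qed
  from this[of n] show ?thesis by auto
qed

lemma stepA2:
  assumes "reach n d v0 (p, q)" "j < n" "snd p j mod d \<noteq> 0"
  shows "\<exists>p' q'. reach n d v0 (p', q') \<and> snd p' = snd p \<and> fst p' j mod d \<noteq> 0
     \<and> (\<forall>k. k \<noteq> j \<longrightarrow> fst p' k = fst p k)"
proof (cases "fst p j mod d = 0")
  case False
  then show ?thesis using assms by blast
next
  case True
  obtain a b where ab: "p = (a, b)" by (cases p)
  have "reach n d v0 (smap j p, smap j q)" by (rule reach.rS[OF assms(1,2)])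
  moreover have "fst (smap j p) j mod d \<noteq> 0"
  proof -
    have "(a j + b j) mod d = (a j mod d + b j) mod d" by (simp only: mod_add_left_eq)
    then show ?thesis using True assms(3) unfolding ab by simp
  qed
  ultimately show ?thesis unfolding ab by (intro exI[of _ "smap j (a, b)"] exI[of _ "smap j q"]) auto
qed

lemma stepA3:
  assumes "reach n d v0 (p, q)" "j < n" "prime d"
    and "fst p j mod d \<noteq> 0" "\<forall>k<n. k \<noteq> j \<longrightarrow> snd p k mod d = 0"
  shows "\<exists>p' q'. reach n d v0 (p', q') \<and> (\<forall>k<n. k \<noteq> j \<longrightarrow> fst p' k mod d = 0 \<and> snd p' k mod d = 0)"
proof -
  have "t \<le> n \<Longrightarrow> \<exists>p' q'. reach n d v0 (p', q') \<and> fst p' j = fst p j \<and>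
      (\<forall>k<n. k \<noteq> j \<longrightarrow> snd p' k = snd p k) \<and> (\<forall>k<t. k \<noteq> j \<longrightarrow> fst p' k mod d = 0)" for t
  proof (induction t)
    case 0
    then show ?case using assms(1) by blast
  next
    case (Suc t)
    then obtain p' q' where r: "reach n d v0 (p', q')" and aj: "fst p' j = fst p j"
      and bk: "\<forall>k<n. k \<noteq> j \<longrightarrow> snd p' k = snd p k"
      and z: "\<forall>k<t. k \<noteq> j \<longrightarrow> fst p' k mod d = 0" by auto
    show ?case
    proof (cases "t = j")
      case True
      then show ?thesis using r aj bk z by (intro exI[of _ p'] exI[of _ q']) (auto simp: less_Suc_eq)
    next
      case False
      have d1: "\<not> d dvd (d - 1)"
        using prime_gt_1_nat[OF assms(3)] by (intro nat_dvd_not_less) auto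
      have "\<not> d dvd fst p' j" using assms(4) aj by (simp add: dvd_eq_mod_eq_0)
      then have "\<not> d dvd ((d - 1) * fst p' j)" using d1 assms(3) by (simp add: prime_dvd_mult_iff)
      then have "\<exists>m. (fst p' t + m * ((d - 1) * fst p' j)) mod d = 0" by (rule solve_mod[OF assms(3)])
      then obtain m where m: "(fst p' t + m * ((d - 1) * fst p' j)) mod d = 0" by (rule exE)
      obtain a b where ab: "p' = (a, b)" by (cases p')
      have r2: "reach n d v0 ((cmap d t j ^^ m) p', (cmap d t j ^^ m) q')"
        by (rule reach_cpow[OF r _ assms(2)]) (use Suc.prems False in auto)
      show ?thesis
        apply (rule exI[of _ "(cmap d t j ^^ m) p'"], rule exI[of _ "(cmap d t j ^^ m) q'"])
        using r2 aj bk z m False unfolding ab by (auto simp: cmap_pow less_Suc_eq)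
    qed
  qed
  from this[of n] obtain p' q' where r: "reach n d v0 (p', q')"
    and bk: "\<forall>k<n. k \<noteq> j \<longrightarrow> snd p' k = snd p k" and z: "\<forall>k<n. k \<noteq> j \<longrightarrow> fst p' k mod d = 0"
    by auto
  have "\<forall>k<n. k \<noteq> j \<longrightarrow> fst p' k mod d = 0 \<and> snd p' k mod d = 0" using bk z assms(5) by simp
  then show ?thesis using r by (intro exI[of _ p'] exI[of _ q']) simp
qed



lemma term_dvd: "(d::nat) dvd x \<Longrightarrow> d dvd y \<Longrightarrow> int d dvd int (x * u) - int (y * w)"
  by (metis dvd_diff dvd_mult2 int_dvd_int_iff)

theorem lemma8:
  fixes d n :: nat and a b c e :: "nat \<Rightarrow> nat"
  assumes "prime d" and "odd d" and "n \<ge> 1"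
    and "(\<Sum>i<n. int (a i * e i) - int (b i * c i)) mod int d = 1"
  shows "\<exists>M Minv. circuit n d M
           \<and> op_eq n d (op_mult n d M Minv) op_id \<and> op_eq n d (op_mult n d Minv M) op_id
           \<and> (\<exists>a' b' c' e' :: nat \<Rightarrow> nat. \<exists>lam mu :: complex.
                op_eq n d (op_mult n d (op_mult n d M (pauli n d a b)) Minv) (op_scale lam (pauli n d a' b'))
              \<and> op_eq n d (op_mult n d (op_mult n d M (pauli n d c e)) Minv) (op_scale mu (pauli n d c' e'))
              \<and> (\<exists>j<n. (int (a' j * e' j) - int (b' j * c' j)) mod int d = 1))"
proof -
  define v0 where "v0 = ((a, b), (c, e))"
  have d1: "d > 1" using assms(1) by (rule prime_gt_1_nat)
  have sp0: "spf n d v0 = 1" using assms(4) by (simp add: spf_def v0_def)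
  have ex: "\<exists>j<n. a j mod d \<noteq> 0 \<or> b j mod d \<noteq> 0"
  proof (rule ccontr)
    assume "\<not> ?thesis"
    then have "\<forall>i<n. d dvd a i \<and> d dvd b i" by (auto simp: dvd_eq_mod_eq_0)
    then have "int d dvd (\<Sum>i<n. int (a i * e i) - int (b i * c i))"
      by (intro dvd_sum) (auto intro: term_dvd)
    then show False using assms(4) d1 by simp
  qed
  have "\<exists>p' q' j. reach n d v0 (p', q') \<and> j < n \<and> (\<forall>k<n. k \<noteq> j \<longrightarrow> fst p' k mod d = 0 \<and> snd p' k mod d = 0)"
  proof (cases "\<exists>j<n. b j mod d \<noteq> 0")
    case True
    then obtain j where j: "j < n" "b j mod d \<noteq> 0" by blast
    have r0: "reach n d v0 ((a, b), (c, e))" unfolding v0_def by (rule reach.r0)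
    obtain p1 q1 where r1: "reach n d v0 (p1, q1)" and b1: "snd p1 j = b j"
      and z1: "\<forall>k<n. k \<noteq> j \<longrightarrow> snd p1 k mod d = 0"
      using stepA1[OF r0 j(1) assms(1)] j(2) by auto
    obtain p2 q2 where r2: "reach n d v0 (p2, q2)" and b2: "snd p2 = snd p1" and a2: "fst p2 j mod d \<noteq> 0"
      using stepA2[OF r1 j(1)] j(2) b1 by auto
    obtain p3 q3 where "reach n d v0 (p3, q3)" "\<forall>k<n. k \<noteq> j \<longrightarrow> fst p3 k mod d = 0 \<and> snd p3 k mod d = 0"
      using stepA3[OF r2 j(1) assms(1) a2] z1 b2 by auto
    then show ?thesis using j(1) by blast
  next
    case False
    then obtain j where j: "j < n" "a j mod d \<noteq> 0" using ex by blast
    have r0: "reach n d v0 ((a, b), (c, e))" unfolding v0_def by (rule reach.r0)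
    obtain p3 q3 where "reach n d v0 (p3, q3)" "\<forall>k<n. k \<noteq> j \<longrightarrow> fst p3 k mod d = 0 \<and> snd p3 k mod d = 0"
      using stepA3[OF r0 j(1) assms(1)] j(2) False by auto
    then show ?thesis using j(1) by blast
  qed
  then obtain p' q' j where r: "reach n d v0 (p', q')" and j: "j < n"
    and z: "\<forall>k<n. k \<noteq> j \<longrightarrow> fst p' k mod d = 0 \<and> snd p' k mod d = 0" by blast
  have sp: "spf n d (p', q') = 1" using reach_spf[OF r] d1 sp0 by simp
  define f where "f = (\<lambda>i. int (fst p' i * snd q' i) - int (snd p' i * fst q' i))"
  have "(\<Sum>i<n. f i) = f j + (\<Sum>i\<in>{..<n}-{j}. f i)"
    using j by (subst sum.remove[OF finite_lessThan, where x = j]) auto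
  moreover have "int d dvd (\<Sum>i\<in>{..<n}-{j}. f i)"
  proof (rule dvd_sum)
    fix i assume "i \<in> {..<n}-{j}"
    then have "d dvd fst p' i" "d dvd snd p' i" using z by (auto simp: dvd_eq_mod_eq_0)
    then show "int d dvd f i" unfolding f_def by (rule term_dvd)
  qed
  moreover have "(\<Sum>i<n. f i) mod int d = 1" using sp by (simp add: spf_def f_def)
  ultimately have loc: "f j mod int d = 1"
    by (metis dvdE mod_mult_self2)
  have "goodop n d v0 (p', q')" using reach_goodop[OF r assms(2)] .
  then obtain M Minv lam mu where A: "circuit n d M" and B: "op_eq n d (op_mult n d M Minv) op_id"
    and C: "op_eq n d (op_mult n d Minv M) op_id"
    and D: "op_eq n d (op_mult n d (op_mult n d M (pauli n d a b)) Minv) (op_scale lam (pauli n d (fst p') (snd p')))"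
    and E: "op_eq n d (op_mult n d (op_mult n d M (pauli n d c e)) Minv) (op_scale mu (pauli n d (fst q') (snd q')))"
    unfolding goodop_def v0_def fst_conv snd_conv by blast
  have F: "\<exists>j<n. (int (fst p' j * snd q' j) - int (snd p' j * fst q' j)) mod int d = 1"
    using loc j unfolding f_def by blast
  show ?thesis
    apply (rule exI[of _ M], rule exI[of _ Minv])
    apply (intro conjI A B C)
    apply (rule exI[of _ "fst p'"], rule exI[of _ "snd p'"], rule exI[of _ "fst q'"], rule exI[of _ "snd q'"],
        rule exI[of _ lam], rule exI[of _ mu])
    using D E F by (intro conjI)
qed

end
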